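(* Let $s\ge2$ and let $\mathcal{C}$ be an $[n,k,d]_q$ linear code with multiple $(r_i,\delta_i)_{i\in[s]}$ localities with respect to a partition $\mathcal{T}_1,\dots,\mathcal{T}_s$ of $[n]$, $n_i=|\mathcal{T}_i|$, $r_1\le\dots\le r_s$, $\delta_1\ge\dots\ge\delta_s\ge2$. Let $\Delta_0=0$ and $\Delta_j=\sum_{i=1}^{j}\lceil n_i/(r_i+\delta_i-1)\rceil(\delta_i-1)$ for $j=1,\dots,s-1$. Suppose $\sum_{i=1}^{s-1}r_i\lceil n_i/(r_i+\delta_i-1)\rceil\le k-1$ and, for each $j=1,\dots,s-1$, $$r_j\left\lceil\frac{\Delta_j-\Delta_{j-1}-1}{\delta_j-1}\right\rceil+(\Delta_j-\Delta_{j-1}-1)<n_j.$$ Then: (i) for $j=1,\dots,s-1$ and $\Delta_{j-1}\le x\le\Delta_j$, $$\Phi(x)\le\sum_{i=1}^{j-1}r_i\left\lceil\frac{n_i}{r_i+\delta_i-1}\right\rceil+r_j\left\lceil\frac{x-\Delta_{j-1}}{\delta_j-1}\right\rceil+x;$$ (ii) for $\Delta_{s-1}\le x\le\rho+1$, $$\Phi(x)\le\sum_{i=1}^{s-1}r_i\left\lceil\frac{n_i}{r_i+\delta_i-1}\right\rceil+r_s\left\lceil\frac{x-\Delta_{s-1}}{\delta_s-1}\right\rceil+x,$$ where $\rho=\max\{x:\Phi(x)-x<k\}$.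
   Context: $[n]=\{1,\dots,n\}$. For an $[n,k,d]_q$ linear code $\mathcal{C}$ with generator matrix columns $\vec g_1,\dots,\vec g_n$, a regenerating set of coordinate $i$ is a subset $R\subseteq[n]$ with $i\in R$ such that $\vec g_i$ is an $\mathbb{F}_q$-linear combination of $\{\vec g_j\}_{j\in R\setminus\{i\}}$; regenerating sets are taken to be minimal (no proper subset of $R\setminus\{i\}$ suffices). $\mathcal{R}_i$ is the collection of regenerating sets of coordinate $i$. A sequence $R_1,\dots,R_m$ with $R_t\in\mathcal{R}_{l_t}$, $l_t\in[n]$, has a nontrivial union if $l_j\notin\bigcup_{t<j}R_t$ for all $j$. $\Phi(0)=0$ and for $x\ge1$, $\Phi(x)=\min\{|\bigcup_{t=1}^xR_t|: R_t\in\mathcal{R}_{l_t},\ R_1,\dots,R_x \text{ have a nontrivial union}\}$. Multiple $(r_i,\delta_i)_{i\in[s]}$ localities: $\mathcal{T}_1,\dots,\mathcal{T}_s$ is a partition of $[n]$, $r_1\le\dots\le r_s$ and $\delta_1\ge\dots\ge\delta_s\ge2$ are integers, and for each $i\in[s]$ and each $\iota\in\mathcal{T}_i$ there is $S_\iota\subseteq\mathcal{T}_i$ with $\iota\in S_\iota$, $\delta_i\le|S_\iota|\le r_i+\delta_i-1$, such that for every $E\subseteq S_\iota$ with $|E|=\delta_i-1$ and every $j\in E$, $(S_\iota\setminus E)\cup\{j\}\in\mathcal{R}_j$. *)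

theory Defs
  imports "HOL-Analysis.Analysis" "HOL-Library.Extended_Nat"
begin

text \<open>A linear code of length n is given by the columns g 1, ..., g n of a generator
matrix, each column a vector in 'f ^ 'k (k = CARD('k) rows).\<close>

definition regenerating ::
  "(nat \<Rightarrow> 'f::field ^ 'k) \<Rightarrow> nat \<Rightarrow> nat \<Rightarrow> nat set \<Rightarrow> bool" where
  "regenerating g n i R \<longleftrightarrow>
     R \<subseteq> {1..n} \<and> i \<in> R \<and>
     g i \<in> vec.span (g ` (R - {i})) \<and>
     (\<forall>S. S \<subset> R - {i} \<longrightarrow> g i \<notin> vec.span (g ` S))"

definition Phi :: "(nat \<Rightarrow> 'f::field ^ 'k) \<Rightarrow> nat \<Rightarrow> nat \<Rightarrow> enat" where
  "Phi g n x = Inf {enat (card (\<Union>t\<in>{1..x}. R t)) | R l.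
      (\<forall>t\<in>{1..x}. l t \<in> {1..n} \<and> regenerating g n (l t) (R t)) \<and>
      (\<forall>j\<in>{1..x}. l j \<notin> (\<Union>t\<in>{1..<j}. R t))}"

definition rho :: "(nat \<Rightarrow> 'f::field ^ 'k) \<Rightarrow> nat \<Rightarrow> nat \<Rightarrow> nat" where
  "rho g n k = Max {x. Phi g n x - enat x < enat k}"

definition multiple_localities ::
  "(nat \<Rightarrow> 'f::field ^ 'k) \<Rightarrow> nat \<Rightarrow> nat \<Rightarrow> (nat \<Rightarrow> nat set)
     \<Rightarrow> (nat \<Rightarrow> nat) \<Rightarrow> (nat \<Rightarrow> nat) \<Rightarrow> bool" where
  "multiple_localities g n s T r \<delta> \<longleftrightarrow>
     (\<forall>i\<in>{1..s}. T i \<noteq> {}) \<and>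
     (\<forall>i\<in>{1..s}. \<forall>j\<in>{1..s}. i \<noteq> j \<longrightarrow> T i \<inter> T j = {}) \<and>
     (\<Union>i\<in>{1..s}. T i) = {1..n} \<and>
     (\<forall>i\<in>{1..s}. \<forall>j\<in>{1..s}. i \<le> j \<longrightarrow> r i \<le> r j \<and> \<delta> j \<le> \<delta> i) \<and>
     (\<forall>i\<in>{1..s}. \<delta> i \<ge> 2) \<and>
     (\<forall>i\<in>{1..s}. \<forall>\<iota>\<in>T i. \<exists>S. S \<subseteq> T i \<and> \<iota> \<in> S \<and>
        \<delta> i \<le> card S \<and> card S \<le> r i + \<delta> i - 1 \<and>
        (\<forall>E. E \<subseteq> S \<and> card E = \<delta> i - 1 \<longrightarrow>
           (\<forall>j\<in>E. regenerating g n j ((S - E) \<union> {j}))))"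

definition ncl :: "(nat \<Rightarrow> nat set) \<Rightarrow> (nat \<Rightarrow> nat) \<Rightarrow> (nat \<Rightarrow> nat) \<Rightarrow> nat \<Rightarrow> int" where
  "ncl T r \<delta> i = \<lceil>real (card (T i)) / real (r i + \<delta> i - 1)\<rceil>"

definition Delta :: "(nat \<Rightarrow> nat set) \<Rightarrow> (nat \<Rightarrow> nat) \<Rightarrow> (nat \<Rightarrow> nat) \<Rightarrow> nat \<Rightarrow> int" where
  "Delta T r \<delta> j = (\<Sum>i=1..j. ncl T r \<delta> i * (int (\<delta> i) - 1))"

end

theory Submission
  imports Defs
begin

definition seqok :: "(nat \<Rightarrow> 'f::field ^ 'k) \<Rightarrow> nat \<Rightarrow> nat \<Rightarrow> (nat \<Rightarrow> nat set) \<Rightarrow> (nat \<Rightarrow> nat) \<Rightarrow> bool" where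
  "seqok g n x R l \<longleftrightarrow> (\<forall>t\<in>{1..x}. l t \<in> {1..n} \<and> regenerating g n (l t) (R t)) \<and>
      (\<forall>j\<in>{1..x}. l j \<notin> (\<Union>t\<in>{1..<j}. R t))"

definition reach :: "(nat \<Rightarrow> 'f::field ^ 'k) \<Rightarrow> nat \<Rightarrow> nat \<Rightarrow> nat set \<Rightarrow> bool" where
  "reach g n x U \<longleftrightarrow> (\<exists>R l. seqok g n x R l \<and> U = (\<Union>t\<in>{1..x}. R t))"

lemma reach_Phi: "reach g n x U \<Longrightarrow> Phi g n x \<le> enat (card U)"
  unfolding Phi_def reach_def seqok_def
  by (rule Inf_lower) blast

lemma enat_Inf_in: "A \<noteq> {} \<Longrightarrow> Inf (A::enat set) \<in> A"
  unfolding Inf_enat_def by (auto intro: LeastI)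

lemma enat_Inf_empty: "Inf ({}::enat set) = \<infinity>"
  unfolding Inf_enat_def by simp

lemma Phi_fin: assumes "Phi g n x \<noteq> \<infinity>" shows "\<exists>U. reach g n x U \<and> Phi g n x = enat (card U)"
proof -
  let ?A = "{enat (card (\<Union>t\<in>{1..x}. R t)) | R l.
      (\<forall>t\<in>{1..x}. l t \<in> {1..n} \<and> regenerating g n (l t) (R t)) \<and>
      (\<forall>j\<in>{1..x}. l j \<notin> (\<Union>t\<in>{1..<j}. R t))}"
  have P: "Phi g n x = Inf ?A" unfolding Phi_def by (rule refl)
  have ne: "?A \<noteq> {}"
  proof
    assume "?A = {}"
    then have "Phi g n x = \<infinity>" unfolding P by (simp only: enat_Inf_empty)
    then show False using assms by simp
  qed
  have "Inf ?A \<in> ?A" using ne by (rule enat_Inf_in)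
  then obtain R l where h1: "Inf ?A = enat (card (\<Union>t\<in>{1..x}. R t))"
    and h2: "(\<forall>t\<in>{1..x}. l t \<in> {1..n} \<and> regenerating g n (l t) (R t)) \<and>
      (\<forall>j\<in>{1..x}. l j \<notin> (\<Union>t\<in>{1..<j}. R t))"
    unfolding mem_Collect_eq by blast
  have "seqok g n x R l" using h2 by (simp only: seqok_def)
  then have "reach g n x (\<Union>t\<in>{1..x}. R t)" unfolding reach_def by blast
  then show ?thesis using h1 P by auto
qed

lemma reach_0: "reach g n 0 {}"
  unfolding reach_def seqok_def by auto

lemma regen_sub: "regenerating g n i R \<Longrightarrow> R \<subseteq> {1..n}"
  unfolding regenerating_def by auto

lemma reach_sub: "reach g n x U \<Longrightarrow> U \<subseteq> {1..n}"
  unfolding reach_def seqok_def using regen_sub by fastforce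

lemma reach_step:
  assumes "reach g n x U" "l' \<in> {1..n}" "regenerating g n l' R'" "l' \<notin> U"
  shows "reach g n (Suc x) (U \<union> R')"
proof -
  obtain R l where s: "seqok g n x R l" and U: "U = (\<Union>t\<in>{1..x}. R t)"
    using assms(1) unfolding reach_def by blast
  define R2 where "R2 = R(Suc x := R')"
  define l2 where "l2 = l(Suc x := l')"
  have "seqok g n (Suc x) R2 l2"
    using s assms(2-4) unfolding seqok_def R2_def l2_def U
    by (auto simp: le_Suc_eq)
  moreover have "U \<union> R' = (\<Union>t\<in>{1..Suc x}. R2 t)"
    unfolding U R2_def by (auto simp: le_Suc_eq)
  ultimately show ?thesis unfolding reach_def by blast
qed

lemma reach_prefix:
  assumes "reach g n x U" "y \<le> x" shows "\<exists>V. reach g n y V \<and> V \<subseteq> U"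
proof -
  obtain R l where s: "seqok g n x R l" and U: "U = (\<Union>t\<in>{1..x}. R t)"
    using assms(1) unfolding reach_def by blast
  have "seqok g n y R l" using s assms(2) unfolding seqok_def by auto
  moreover have "(\<Union>t\<in>{1..y}. R t) \<subseteq> U" using assms(2) U by auto
  ultimately show ?thesis unfolding reach_def by blast
qed

lemma seqok_nb: "seqok g n x R l \<Longrightarrow> j \<in> {1..x} \<Longrightarrow> t \<in> {1..<j} \<Longrightarrow> l j \<notin> R t"
  unfolding seqok_def by blast

lemma seqok_la: "seqok g n x R l \<Longrightarrow> t \<in> {1..x} \<Longrightarrow> l t \<in> R t"
  unfolding seqok_def regenerating_def by blast

lemma seqok_inj: assumes "seqok g n x R l" shows "inj_on l {1..x}"
proof (rule inj_onI)
  fix a b assume ab: "a \<in> {1..x}" "b \<in> {1..x}" "l a = l b"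
  show "a = b"
  proof (rule ccontr)
    assume "a \<noteq> b"
    then consider "a < b" | "b < a" by linarith
    then show False
    proof cases
      case 1
      have "l b \<notin> R a" by (rule seqok_nb[OF assms ab(2)]) (use 1 ab in auto)
      then show ?thesis using seqok_la[OF assms ab(1)] ab(3) by simp
    next
      case 2
      have "l a \<notin> R b" by (rule seqok_nb[OF assms ab(1)]) (use 2 ab in auto)
      then show ?thesis using seqok_la[OF assms ab(2)] ab(3) by simp
    qed
  qed
qed

lemma seqok_card: "seqok g n x R l \<Longrightarrow> card (l ` {1..x}) = x"
  using seqok_inj by (metis card_atLeastAtMost card_image diff_Suc_1)

lemma reach_le_n: assumes "reach g n x U" shows "x \<le> n"
proof -
  obtain R l where s: "seqok g n x R l" using assms unfolding reach_def by blast
  have "l ` {1..x} \<subseteq> {1..n}" using s unfolding seqok_def by blast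
  then have "card (l ` {1..x}) \<le> card {1..n}" by (intro card_mono) auto
  then show ?thesis using seqok_card[OF s] by simp
qed

lemma reach_rank:
  fixes g :: "nat \<Rightarrow> 'f::field ^ 'k"
  assumes "reach g n x U" "vec.span (g ` U) = UNIV"
  shows "x + CARD('k) \<le> card U"
proof -
  obtain R l where s: "seqok g n x R l" and U: "U = (\<Union>t\<in>{1..x}. R t)"
    using assms(1) unfolding reach_def by blast
  let ?L = "l ` {1..x}"
  have la: "\<And>t. t \<in> {1..x} \<Longrightarrow> l t \<in> R t" using seqok_la[OF s] by blast
  have LU: "?L \<subseteq> U" using la U by auto
  have finU: "finite U" using reach_sub[OF assms(1)] finite_subset by blast
  have key: "\<And>t. t \<in> {1..x} \<Longrightarrow> g (l t) \<in> vec.span (g ` (U - ?L))"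
  proof -
    fix t show "t \<in> {1..x} \<Longrightarrow> g (l t) \<in> vec.span (g ` (U - ?L))"
    proof (induction t rule: less_induct)
      case (less t)
      have sp: "g (l t) \<in> vec.span (g ` (R t - {l t}))"
        using s less.prems unfolding seqok_def regenerating_def by auto
      have "g ` (R t - {l t}) \<subseteq> vec.span (g ` (U - ?L))"
      proof
        fix v assume "v \<in> g ` (R t - {l t})"
        then obtain w where w: "w \<in> R t" "w \<noteq> l t" "v = g w" by auto
        have wU: "w \<in> U" using w less.prems U by auto
        show "v \<in> vec.span (g ` (U - ?L))"
        proof (cases "w \<in> ?L")
          case False then show ?thesis using w wU by (simp add: vec.span_base)
        next
          case True
          then obtain t' where t': "t' \<in> {1..x}" "w = l t'" by auto
          have "t' < t"
          proof (rule ccontr)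
            assume "\<not> t' < t"
            then have "t < t'" using w t' by (metis linorder_neqE_nat)
            then have "l t' \<notin> R t" by (intro seqok_nb[OF s t'(1)]) (use less.prems in auto)
            then show False using w t' by simp
          qed
          then show ?thesis using less.IH t' w by auto
        qed
      qed
      then have "vec.span (g ` (R t - {l t})) \<subseteq> vec.span (g ` (U - ?L))"
        by (simp add: vec.span_minimal)
      then show ?case using sp by auto
    qed
  qed
  have "g ` U \<subseteq> vec.span (g ` (U - ?L))"
  proof
    fix v assume "v \<in> g ` U"
    then obtain w where w: "w \<in> U" "v = g w" by auto
    show "v \<in> vec.span (g ` (U - ?L))"
      using key w by (cases "w \<in> ?L") (auto simp: vec.span_base)
  qed
  then have "vec.span (g ` U) \<subseteq> vec.span (g ` (U - ?L))" by (simp add: vec.span_minimal)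
  then have "(UNIV :: ('f^'k) set) \<subseteq> vec.span (g ` (U - ?L))" using assms(2) by simp
  then have "vec.dim (UNIV :: ('f^'k) set) \<le> card (g ` (U - ?L))"
    by (intro vec.span_card_ge_dim) (auto intro: finite_subset[OF _ finU])
  also have "\<dots> \<le> card (U - ?L)" by (rule card_image_le) (use finU in auto)
  also have "\<dots> = card U - x" using LU finU seqok_card[OF s]
    by (simp add: card_Diff_subset finite_subset)
  finally have "CARD('k) \<le> card U - x" by (simp add: card_cart_basis)
  moreover have "x \<le> card U" using LU finU seqok_card[OF s] card_mono by metis
  ultimately show ?thesis by linarith
qed

lemma loc_ne: assumes "multiple_localities g n s T r \<delta>" shows "\<forall>i\<in>{1..s}. T i \<noteq> {}"
  using assms unfolding multiple_localities_def by (elim conjE) assumption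

lemma loc_disj: assumes "multiple_localities g n s T r \<delta>" shows "\<forall>i\<in>{1..s}. \<forall>j\<in>{1..s}. i \<noteq> j \<longrightarrow> T i \<inter> T j = {}"
  using assms unfolding multiple_localities_def by (elim conjE) assumption

lemma loc_cover: assumes "multiple_localities g n s T r \<delta>" shows "(\<Union>i\<in>{1..s}. T i) = {1..n}"
  using assms unfolding multiple_localities_def by (elim conjE) assumption

lemma loc_mono: assumes "multiple_localities g n s T r \<delta>" shows "\<forall>i\<in>{1..s}. \<forall>j\<in>{1..s}. i \<le> j \<longrightarrow> r i \<le> r j \<and> \<delta> j \<le> \<delta> i"
  using assms unfolding multiple_localities_def by (elim conjE) assumption

lemma loc_d2: assumes "multiple_localities g n s T r \<delta>" shows "\<forall>i\<in>{1..s}. \<delta> i \<ge> 2"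
  using assms unfolding multiple_localities_def by (elim conjE) assumption

lemma loc_ex: assumes "multiple_localities g n s T r \<delta>" shows "\<forall>i\<in>{1..s}. \<forall>\<iota>\<in>T i. \<exists>S. S \<subseteq> T i \<and> \<iota> \<in> S \<and>
        \<delta> i \<le> card S \<and> card S \<le> r i + \<delta> i - 1 \<and>
        (\<forall>E. E \<subseteq> S \<and> card E = \<delta> i - 1 \<longrightarrow>
           (\<forall>j\<in>E. regenerating g n j ((S - E) \<union> {j})))"
  using assms unfolding multiple_localities_def by (elim conjE) assumption

lemma reach_chain:
  assumes "finite B" "B \<noteq> {}" "reach g n x U"
    "\<forall>b\<in>B. b \<in> {1..n} \<and> regenerating g n b (C \<union> {b})" "B \<inter> U = {}" "B \<inter> C = {}"
  shows "reach g n (x + card B) (U \<union> C \<union> B)"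
  using assms(1,2,4,5,6)
proof (induction B rule: finite_ne_induct)
  case (singleton b)
  have "reach g n (Suc x) (U \<union> (C \<union> {b}))"
    by (rule reach_step[OF assms(3)]) (use singleton in auto)
  then show ?case by (simp add: Un_assoc)
next
  case (insert b B)
  have IH: "reach g n (x + card B) (U \<union> C \<union> B)" using insert by blast
  have "reach g n (Suc (x + card B)) (U \<union> C \<union> B \<union> (C \<union> {b}))"
    by (rule reach_step[OF IH]) (use insert in auto)
  moreover have "U \<union> C \<union> B \<union> (C \<union> {b}) = U \<union> C \<union> insert b B" by auto
  ultimately show ?case using insert by simp
qed

lemma loc_T_sub: assumes "multiple_localities g n s T r \<delta>" "i \<in> {1..s}" shows "T i \<subseteq> {1..n}"
  using loc_cover[OF assms(1)] assms(2) by blast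

lemma loc_delta: assumes "multiple_localities g n s T r \<delta>" "i \<in> {1..s}" shows "2 \<le> \<delta> i"
  using loc_d2[OF assms(1)] assms(2) by blast

lemma loc_S:
  assumes "multiple_localities g n s T r \<delta>" "i \<in> {1..s}" "\<iota> \<in> T i"
  obtains S where "S \<subseteq> T i" "\<iota> \<in> S" "\<delta> i \<le> card S" "card S \<le> r i + \<delta> i - 1"
    "\<And>E j. E \<subseteq> S \<Longrightarrow> card E = \<delta> i - 1 \<Longrightarrow> j \<in> E \<Longrightarrow> regenerating g n j ((S - E) \<union> {j})"
proof -
  have "\<exists>S. S \<subseteq> T i \<and> \<iota> \<in> S \<and>
        \<delta> i \<le> card S \<and> card S \<le> r i + \<delta> i - 1 \<and>
        (\<forall>E. E \<subseteq> S \<and> card E = \<delta> i - 1 \<longrightarrow>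
           (\<forall>j\<in>E. regenerating g n j ((S - E) \<union> {j})))"
    using bspec[OF bspec[OF loc_ex[OF assms(1)] assms(2)] assms(3)] .
  then obtain S where "S \<subseteq> T i \<and> \<iota> \<in> S \<and>
        \<delta> i \<le> card S \<and> card S \<le> r i + \<delta> i - 1 \<and>
        (\<forall>E. E \<subseteq> S \<and> card E = \<delta> i - 1 \<longrightarrow>
           (\<forall>j\<in>E. regenerating g n j ((S - E) \<union> {j})))"
    by (elim exE)
  then show ?thesis using that by blast
qed

lemma group:
  assumes loc: "multiple_localities g n s T r \<delta>" and i: "i \<in> {1..s}"
    and re: "reach g n x U" and io: "\<iota> \<in> T i" "\<iota> \<notin> U"
  obtains S where "S \<subseteq> T i" "\<iota> \<in> S" "card S \<le> r i + \<delta> i - 1"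
    "\<And>t. 1 \<le> t \<Longrightarrow> t \<le> \<delta> i - 1 \<Longrightarrow> t \<le> card (S - U) \<Longrightarrow>
       \<exists>U'. reach g n (x + t) U' \<and> U \<subseteq> U' \<and> U' \<subseteq> U \<union> S \<and>
          card U' \<le> card U + t + (card (S - U) - (\<delta> i - 1))"
proof -
  obtain S where S: "S \<subseteq> T i" "\<iota> \<in> S" "\<delta> i \<le> card S" "card S \<le> r i + \<delta> i - 1"
    and Sreg: "\<And>E j. E \<subseteq> S \<Longrightarrow> card E = \<delta> i - 1 \<Longrightarrow> j \<in> E \<Longrightarrow> regenerating g n j ((S - E) \<union> {j})"
    by (rule loc_S[OF loc i io(1)]) (rule that)
  define D where "D = \<delta> i - 1"
  define A where "A = S - U"
  have Tn: "T i \<subseteq> {1..n}" using loc_T_sub[OF loc i] .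
  have finT: "finite (T i)" using Tn by (rule finite_subset) simp
  have finS: "finite S" using S(1) finT by (rule finite_subset)
  have finU: "finite U" using reach_sub[OF re] by (rule finite_subset) simp
  have finA: "finite A" unfolding A_def using finS by simp
  have AS: "A \<subseteq> S" unfolding A_def by blast
  have cardA: "card A \<le> card S" using AS finS card_mono by blast
  obtain E where E: "E \<subseteq> S" "card E = D" "card (E \<inter> A) = min D (card A)"
  proof (cases "D \<le> card A")
    case True
    obtain E where E: "E \<subseteq> A" "card E = D" using obtain_subset_with_card_n[OF True] by metis
    have ES: "E \<subseteq> S" using E(1) AS by (rule order_trans)
    have "E \<inter> A = E" using E(1) by (rule Int_absorb2)
    then have "card (E \<inter> A) = min D (card A)" using E(2) True by (simp only: min_def) simp
    then show ?thesis by (rule that[OF ES E(2)])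
  next
    case False
    have "card (S - A) = card S - card A" using finA AS by (rule card_Diff_subset)
    then have le: "D - card A \<le> card (S - A)" using S(3) unfolding D_def by linarith
    obtain F where F: "F \<subseteq> S - A" "card F = D - card A" using obtain_subset_with_card_n[OF le] by metis
    have finF: "finite F" using F(1) finS by (metis finite_Diff finite_subset)
    have dj: "A \<inter> F = {}" using F(1) by blast
    have "card (A \<union> F) = card A + card F" using finA finF dj by (rule card_Un_disjoint)
    then have c: "card (A \<union> F) = D" using F(2) False by simp
    have "(A \<union> F) \<inter> A = A" by blast
    then have c2: "card ((A \<union> F) \<inter> A) = min D (card A)" using False by simp
    have "A \<union> F \<subseteq> S" using AS F(1) by blast
    then show ?thesis using c c2 by (rule that)
  qed
  have finE: "finite E" using E(1) finS by (rule finite_subset)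
  show ?thesis
  proof (rule that[OF S(1,2,4)])
    fix t assume t: "1 \<le> t" "t \<le> \<delta> i - 1" "t \<le> card (S - U)"
    have "t \<le> card (E \<inter> A)" using t E(3) D_def A_def by simp
    then obtain B where B: "B \<subseteq> E \<inter> A" "card B = t" using obtain_subset_with_card_n by blast
    have finB: "finite B" using B(1) finE by (metis finite_Int finite_subset)
    have Bne: "B \<noteq> {}" using B(2) t(1) by auto
    have "reach g n (x + card B) (U \<union> (S - E) \<union> B)"
    proof (rule reach_chain[OF finB Bne re])
      show "\<forall>b\<in>B. b \<in> {1..n} \<and> regenerating g n b ((S - E) \<union> {b})"
      proof
        fix b assume b: "b \<in> B"
        then have bE: "b \<in> E" using B(1) by blast
        have "regenerating g n b ((S - E) \<union> {b})"
          using Sreg[OF E(1) _ bE] E(2) unfolding D_def by blast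
        moreover have "b \<in> {1..n}" using bE E(1) S(1) Tn by blast
        ultimately show "b \<in> {1..n} \<and> regenerating g n b ((S - E) \<union> {b})" by blast
      qed
      show "B \<inter> U = {}" using B(1) A_def by blast
      show "B \<inter> (S - E) = {}" using B(1) by blast
    qed
    moreover have "card (U \<union> (S - E) \<union> B) \<le> card U + t + (card (S - U) - (\<delta> i - 1))"
    proof -
      have eq: "U \<union> (S - E) \<union> B = U \<union> (A - (E \<inter> A)) \<union> B" unfolding A_def by blast
      have "card (A - (E \<inter> A)) = card A - card (E \<inter> A)"
        using finite_Int[OF disjI2[OF finA]] Int_lower2 by (rule card_Diff_subset)
      then have c1: "card (A - (E \<inter> A)) = card A - D" using E(3) by simp
      have "card (U \<union> (A - (E \<inter> A)) \<union> B) \<le> card (U \<union> (A - (E \<inter> A))) + card B"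
        by (rule card_Un_le)
      also have "\<dots> \<le> card U + card (A - (E \<inter> A)) + card B"
        using card_Un_le by simp
      finally show ?thesis using eq c1 B(2) A_def D_def by simp
    qed
    moreover have "U \<union> (S - E) \<union> B \<subseteq> U \<union> S" using B(1) E(1) by blast
    ultimately show "\<exists>U'. reach g n (x + t) U' \<and> U \<subseteq> U' \<and> U' \<subseteq> U \<union> S \<and>
          card U' \<le> card U + t + (card (S - U) - (\<delta> i - 1))"
      using B(2) by blast
  qed
qed

lemma hA: "1 \<le> (d::nat) \<Longrightarrow> d \<le> D \<Longrightarrow> y div d + 1 \<le> (y + D) div d"
proof -
  assume a: "1 \<le> d" "d \<le> D"
  have "(y + d) div d = y div d + 1" using a by simp
  moreover have "(y + d) div d \<le> (y + D) div d" using a by (intro div_le_mono) simp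
  ultimately show ?thesis by simp
qed

lemma hB: "1 \<le> (d::nat) \<Longrightarrow> y < N \<Longrightarrow> y div d + 1 \<le> (N + d - 1) div d"
proof -
  assume a: "1 \<le> d" "y < N"
  have "(y + d) div d = y div d + 1" using a by simp
  moreover have "(y + d) div d \<le> (N + d - 1) div d" using a by (intro div_le_mono) simp
  ultimately show ?thesis by simp
qed

lemma hC: "1 \<le> (d::nat) \<Longrightarrow> (y::nat) \<le> N \<Longrightarrow> y div d \<le> (N + d - 1) div d"
  by (intro div_le_mono) simp

lemma phase:
  fixes g :: "nat \<Rightarrow> 'f::field ^ 'k"
  assumes loc: "multiple_localities g n s T r \<delta>"
    and I: "I \<subseteq> {1..s}" and d: "1 \<le> d"
    and Ipar: "\<forall>i\<in>I. r i \<le> rr \<and> d + 1 \<le> \<delta> i"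
    and room: "\<And>y U. y < N \<Longrightarrow> reach g n (x0 + y) U \<Longrightarrow> U0 \<subseteq> U \<Longrightarrow> U - U0 \<subseteq> (\<Union>i\<in>I. T i)
        \<Longrightarrow> card U \<le> card U0 + y + rr * (y div d) \<Longrightarrow> (\<exists>i\<in>I. \<exists>\<iota>\<in>T i. \<iota> \<notin> U) \<or> stop U"
  shows "y \<le> N \<Longrightarrow> reach g n (x0 + y) U \<Longrightarrow> U0 \<subseteq> U \<Longrightarrow> U - U0 \<subseteq> (\<Union>i\<in>I. T i)
        \<Longrightarrow> card U \<le> card U0 + y + rr * (y div d) \<Longrightarrow>
      \<exists>x' U'. x' \<le> x0 + N \<and> reach g n x' U' \<and> U0 \<subseteq> U' \<and> U' - U0 \<subseteq> (\<Union>i\<in>I. T i) \<and>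
        card U' \<le> card U0 + N + rr * ((N + d - 1) div d) \<and> (x' = x0 + N \<or> stop U')"
proof (induction "N - y" arbitrary: y U rule: less_induct)
  case less
  have fin: "card U0 + y + rr * (y div d) \<le> card U0 + N + rr * ((N + d - 1) div d)"
    using hC[OF d less.prems(1)] less.prems(1) by (simp add: add_mono mult_le_mono2)
  show ?case
  proof (cases "y = N")
    case True
    then show ?thesis using less.prems le_trans[OF less.prems(5) fin]
      by (intro exI[of _ "x0 + y"] exI[of _ U]) simp
  next
    case False
    then have yN: "y < N" using less.prems(1) by simp
    from room[OF yN less.prems(2-5)]
    consider "stop U" | i \<iota> where "i \<in> I" "\<iota> \<in> T i" "\<iota> \<notin> U" by blast
    then show ?thesis
    proof cases
      case 1
      then show ?thesis using less.prems le_trans[OF less.prems(5) fin] yN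
        by (intro exI[of _ "x0 + y"] exI[of _ U]) simp
    next
      case 2
      have iI: "i \<in> {1..s}" using 2(1) I by blast
      have ri: "r i \<le> rr" and di: "d + 1 \<le> \<delta> i" using Ipar 2(1) by auto
      obtain S where S: "S \<subseteq> T i" "\<iota> \<in> S" "card S \<le> r i + \<delta> i - 1"
        and G: "\<And>t. 1 \<le> t \<Longrightarrow> t \<le> \<delta> i - 1 \<Longrightarrow> t \<le> card (S - U) \<Longrightarrow>
           \<exists>U'. reach g n (x0 + y + t) U' \<and> U \<subseteq> U' \<and> U' \<subseteq> U \<union> S \<and>
              card U' \<le> card U + t + (card (S - U) - (\<delta> i - 1))"
        by (rule group[OF loc iI less.prems(2) 2(2,3)]) (rule that)
      define a where "a = card (S - U)"
      define D where "D = \<delta> i - 1"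
      have finS: "finite S" using S(1) loc_T_sub[OF loc iI] by (metis finite_atLeastAtMost finite_subset)
      have a1: "1 \<le> a" unfolding a_def using S(2) 2(3) finS
        by (metis Diff_iff card_0_eq finite_Diff empty_iff less_one not_le)
      have aS: "a \<le> card S" unfolding a_def using finS by (simp add: card_mono)
      have ov: "a - D \<le> rr" using aS S(3) ri unfolding D_def by linarith
      have dD: "d \<le> D" using di unfolding D_def by linarith
      have sub: "\<And>U'. U' \<subseteq> U \<union> S \<Longrightarrow> U' - U0 \<subseteq> (\<Union>i\<in>I. T i)"
        using less.prems(4) S(1) 2(1) by blast
      show ?thesis
      proof (cases "N - y \<le> min D a")
        case True
        have t1: "1 \<le> N - y" using yN by simp
        obtain U' where U': "reach g n (x0 + y + (N - y)) U'" "U \<subseteq> U'" "U' \<subseteq> U \<union> S"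
          "card U' \<le> card U + (N - y) + (a - D)"
          using G[OF t1] True unfolding a_def D_def by auto
        have "card U' \<le> card U0 + y + rr * (y div d) + (N - y) + rr"
          using U'(4) less.prems(5) ov by linarith
        also have "\<dots> = card U0 + N + rr * (y div d + 1)" using yN by simp
        also have "\<dots> \<le> card U0 + N + rr * ((N + d - 1) div d)"
          using mult_le_mono2[OF hB[OF d yN], of rr] by simp
        finally have cU: "card U' \<le> card U0 + N + rr * ((N + d - 1) div d)" .
        show ?thesis
          apply (intro exI[of _ "x0 + N"] exI[of _ U'])
          using U' cU sub[OF U'(3)] less.prems(3) yN by auto
      next
        case False
        define tm where "tm = min D a"
        have t1: "1 \<le> tm" unfolding tm_def using a1 dD d by simp
        obtain U' where U': "reach g n (x0 + y + tm) U'" "U \<subseteq> U'" "U' \<subseteq> U \<union> S"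
          "card U' \<le> card U + tm + (a - D)"
          using G[OF t1] unfolding tm_def a_def D_def by auto
        have cU: "card U' \<le> card U0 + (y + tm) + rr * ((y + tm) div d)"
        proof (cases "D \<le> a")
          case True
          then have tmD: "tm = D" unfolding tm_def by simp
          have "card U' \<le> card U0 + y + rr * (y div d) + tm + rr"
            using U'(4) less.prems(5) ov by linarith
          also have "\<dots> = card U0 + (y + tm) + rr * (y div d + 1)" by simp
          also have "\<dots> \<le> card U0 + (y + tm) + rr * ((y + tm) div d)"
            using mult_le_mono2[OF hA[OF d dD, of y], of rr] tmD by simp
          finally show ?thesis .
        next
          case False
          then have "a - D = 0" by simp
          then have "card U' \<le> card U0 + y + rr * (y div d) + tm"
            using U'(4) less.prems(5) by linarith
          also have "\<dots> \<le> card U0 + (y + tm) + rr * ((y + tm) div d)"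
            by (simp add: div_le_mono mult_le_mono2)
          finally show ?thesis .
        qed
        have lt: "N - (y + tm) < N - y" using t1 False unfolding tm_def by linarith
        have le: "y + tm \<le> N" using False unfolding tm_def by linarith
        have "reach g n (x0 + (y + tm)) U'" using U'(1) by (simp add: add.assoc)
        moreover have "U0 \<subseteq> U'" using less.prems(3) U'(2) by blast
        ultimately show ?thesis
          using less.hyps[OF lt le] sub[OF U'(3)] cU by blast
      qed
    qed
  qed
qed

lemma ceil_nat:
  assumes "1 \<le> d"
  shows "\<lceil>real_of_int (int N) / real_of_int (int d)\<rceil> = int ((N + d - 1) div d)"
proof -
  define q where "q = (N + d - 1) div d"
  have e: "N + d - 1 = q * d + (N + d - 1) mod d" by (simp add: q_def)
  have m: "(N + d - 1) mod d < d" using assms by simp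
  have q1: "N \<le> q * d" using e m assms by linarith
  have q2: "q * d < N + d" using e m assms by linarith
  have dp: "(0::real) < real d" using assms by simp
  have r1: "real N \<le> real q * real d" using q1 by (metis of_nat_le_iff of_nat_mult)
  have r2: "real q * real d < real N + real d" using q2 by (metis of_nat_less_iff of_nat_mult of_nat_add)
  have "\<lceil>real_of_int (int N) / real_of_int (int d)\<rceil> = int q"
  proof (rule ceiling_unique)
    show "real_of_int (int N) / real_of_int (int d) \<le> of_int (int q)"
      using r1 dp by (simp add: divide_le_eq)
    show "of_int (int q) - 1 < real_of_int (int N) / real_of_int (int d)"
      using r2 dp by (simp add: less_divide_eq algebra_simps)
  qed
  then show ?thesis by (simp add: q_def)
qed

lemma ncl_nonneg: "0 \<le> ncl T r \<delta> i"
  unfolding ncl_def by (simp add: zero_le_ceiling) (smt (verit) divide_nonneg_nonneg of_nat_0_le_iff)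

lemma cdiv_mult: "1 \<le> (d::nat) \<Longrightarrow> (c * d + d - 1) div d = c"
proof -
  assume d: "1 \<le> d"
  show ?thesis by (rule div_nat_eqI) (use d in \<open>auto simp: algebra_simps\<close>)
qed

lemma stage:
  fixes g :: "nat \<Rightarrow> 'f::field ^ 'k"
  assumes loc: "multiple_localities g n s T r \<delta>" and j: "j \<in> {1..s}"
    and h5: "1 \<le> Y \<Longrightarrow> (Y - 1) + r j * ((Y - 1 + (\<delta> j - 1) - 1) div (\<delta> j - 1)) < card (T j)"
    and re: "reach g n x0 U0" and U0s: "U0 \<subseteq> (\<Union>i\<in>{1..j-1}. T i)" and NY: "N \<le> Y"
  shows "\<exists>U. reach g n (x0 + N) U \<and> U \<subseteq> (\<Union>i\<in>{1..j}. T i) \<and>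
           card U \<le> card U0 + N + r j * ((N + (\<delta> j - 1) - 1) div (\<delta> j - 1))"
proof -
  define d where "d = \<delta> j - 1"
  have d1: "1 \<le> d" using loc_delta[OF loc j] unfolding d_def by linarith
  have disj: "U0 \<inter> T j = {}"
  proof -
    have "\<forall>i\<in>{1..j-1}. T i \<inter> T j = {}"
    proof
      fix i assume i: "i \<in> {1..j-1}"
      then have "i \<in> {1..s}" "i \<noteq> j" using j by auto
      then show "T i \<inter> T j = {}" using loc_disj[OF loc] j by blast
    qed
    then show ?thesis using U0s by blast
  qed
  have room: "(\<exists>i\<in>{j}. \<exists>\<iota>\<in>T i. \<iota> \<notin> U) \<or> False"
    if y: "y < N" and reU: "reach g n (x0 + y) U" and sub: "U0 \<subseteq> U" and "U - U0 \<subseteq> (\<Union>i\<in>{j}. T i)"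
      and cU: "card U \<le> card U0 + y + r j * (y div d)" for y U
  proof (rule ccontr)
    assume "\<not> ((\<exists>i\<in>{j}. \<exists>\<iota>\<in>T i. \<iota> \<notin> U) \<or> False)"
    then have TU: "T j \<subseteq> U" by blast
    have finU: "finite U" using reach_sub[OF reU] by (rule finite_subset) simp
    have "T j \<subseteq> U - U0" using TU disj by blast
    then have "card (T j) \<le> card (U - U0)" using finU by (intro card_mono) auto
    also have "\<dots> = card U - card U0" using finite_subset[OF sub finU] sub by (rule card_Diff_subset)
    also have "\<dots> \<le> y + r j * (y div d)" using cU by linarith
    also have "\<dots> \<le> (Y - 1) + r j * ((Y - 1 + d - 1) div d)"
    proof -
      have yY: "y \<le> Y - 1" using y NY by linarith
      have "y div d \<le> (Y - 1 + d - 1) div d" by (rule hC[OF d1 yY])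
      then show ?thesis using yY by (simp add: add_mono mult_le_mono2)
    qed
    also have "\<dots> < card (T j)" using h5 y NY unfolding d_def by linarith
    finally show False by simp
  qed
  have Ipar: "\<forall>i\<in>{j}. r i \<le> r j \<and> d + 1 \<le> \<delta> i" using d1 unfolding d_def by simp
  have "\<exists>x' U'. x' \<le> x0 + N \<and> reach g n x' U' \<and> U0 \<subseteq> U' \<and> U' - U0 \<subseteq> (\<Union>i\<in>{j}. T i) \<and>
        card U' \<le> card U0 + N + r j * ((N + d - 1) div d) \<and> (x' = x0 + N \<or> False)"
    by (rule phase[OF loc _ d1 Ipar room, where y=0 and U=U0]) (use j re in auto)
  then obtain U' where U': "reach g n (x0 + N) U'" "U0 \<subseteq> U'" "U' - U0 \<subseteq> T j"
    "card U' \<le> card U0 + N + r j * ((N + d - 1) div d)" by auto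
  have "U' \<subseteq> (\<Union>i\<in>{1..j}. T i)"
  proof
    fix u assume u: "u \<in> U'"
    show "u \<in> (\<Union>i\<in>{1..j}. T i)"
    proof (cases "u \<in> U0")
      case True
      then obtain i where "i \<in> {1..j-1}" "u \<in> T i" using U0s by blast
      moreover have "{1..j-1} \<subseteq> {1..j}" by auto
      ultimately show ?thesis by blast
    next
      case False then show ?thesis using U'(3) u j by auto
    qed
  qed
  then show ?thesis using U' unfolding d_def by blast
qed

lemma rho_ext:
  fixes g :: "nat \<Rightarrow> 'f::field ^ 'k"
  assumes loc: "multiple_localities g n s T r \<delta>" and sp: "vec.span (g ` {1..n}) = UNIV"
  shows "\<exists>V. reach g n (Suc (rho g n CARD('k))) V"
proof -
  define SS where "SS = {x. Phi g n x - enat x < enat CARD('k)}"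
  have rho: "rho g n CARD('k) = Max SS" unfolding rho_def SS_def by (rule refl)
  have fin_of: "Phi g n x \<noteq> \<infinity>" if "x \<in> SS" for x
  proof
    assume "Phi g n x = \<infinity>"
    then show False using that unfolding SS_def by simp
  qed
  have SSsub: "SS \<subseteq> {0..n}"
  proof
    fix x assume x: "x \<in> SS"
    obtain U where "reach g n x U" using Phi_fin[OF fin_of[OF x]] by blast
    then show "x \<in> {0..n}" using reach_le_n by auto
  qed
  have "Phi g n 0 \<le> enat (card ({}::nat set))" by (rule reach_Phi[OF reach_0])
  then have "Phi g n 0 = 0" by (simp add: zero_enat_def[symmetric])
  then have SS0: "0 \<in> SS" unfolding SS_def by (simp add: zero_enat_def)
  have finSS: "finite SS" using SSsub finite_subset by blast
  have rin: "rho g n CARD('k) \<in> SS" unfolding rho using Max_in[OF finSS] SS0 by blast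
  define m where "m = rho g n CARD('k)"
  have mS: "m \<in> SS" using rin m_def by simp
  obtain V0 where V0: "reach g n m V0" "Phi g n m = enat (card V0)"
    using Phi_fin[OF fin_of[OF mS]] by blast
  have lt: "card V0 - m < CARD('k)" using mS V0(2) unfolding SS_def by simp
  have V0n: "V0 \<subseteq> {1..n}" by (rule reach_sub[OF V0(1)])
  have "V0 \<noteq> {1..n}"
  proof
    assume e: "V0 = {1..n}"
    have "m + CARD('k) \<le> card V0" by (rule reach_rank[OF V0(1)]) (use e sp in simp)
    then show False using lt by linarith
  qed
  then obtain \<iota> where io: "\<iota> \<in> {1..n}" "\<iota> \<notin> V0" using V0n by blast
  then obtain i where i: "i \<in> {1..s}" "\<iota> \<in> T i" using loc_cover[OF loc] by blast
  obtain S where S: "S \<subseteq> T i" "\<iota> \<in> S" "card S \<le> r i + \<delta> i - 1"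
    and G: "\<And>t. 1 \<le> t \<Longrightarrow> t \<le> \<delta> i - 1 \<Longrightarrow> t \<le> card (S - V0) \<Longrightarrow>
       \<exists>U'. reach g n (m + t) U' \<and> V0 \<subseteq> U' \<and> U' \<subseteq> V0 \<union> S \<and>
          card U' \<le> card V0 + t + (card (S - V0) - (\<delta> i - 1))"
    by (rule group[OF loc i(1) V0(1) i(2) io(2)]) (rule that)
  have finS: "finite S" using S(1) loc_T_sub[OF loc i(1)] by (metis finite_atLeastAtMost finite_subset)
  have "1 \<le> card (S - V0)"
  proof -
    have "S - V0 \<noteq> {}" using S(2) io(2) by blast
    then show ?thesis using finS by (simp add: Suc_leI card_gt_0_iff)
  qed
  moreover have "1 \<le> \<delta> i - 1" using loc_delta[OF loc i(1)] by linarith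
  ultimately obtain U' where "reach g n (m + 1) U'" using G[of 1] by auto
  then show ?thesis unfolding m_def by auto
qed

lemma target_eq:
  assumes "x0 \<le> x" "2 \<le> (dl::nat)"
  shows "nat (int a + int b * \<lceil>real_of_int (int x - int x0) / real_of_int (int dl - 1)\<rceil> + int x)
     = a + b * ((x - x0 + (dl - 1) - 1) div (dl - 1)) + x"
proof -
  have e1: "int x - int x0 = int (x - x0)" using assms by simp
  have e2: "int dl - 1 = int (dl - 1)" using assms by simp
  have "\<lceil>real_of_int (int x - int x0) / real_of_int (int dl - 1)\<rceil> = int ((x - x0 + (dl - 1) - 1) div (dl - 1))"
    unfolding e1 e2 by (rule ceil_nat) (use assms in simp)
  then have "int a + int b * \<lceil>real_of_int (int x - int x0) / real_of_int (int dl - 1)\<rceil> + int x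
     = int (a + b * ((x - x0 + (dl - 1) - 1) div (dl - 1)) + x)" by simp
  then show ?thesis by (simp only: nat_int)
qed

theorem lemma2:
  fixes g :: "nat \<Rightarrow> 'f::{field,finite} ^ 'k"
    and n s :: nat and T :: "nat \<Rightarrow> nat set" and r \<delta> :: "nat \<Rightarrow> nat"
  assumes "s \<ge> 2"
    and "vec.span (g ` {1..n}) = UNIV"
    and "multiple_localities g n s T r \<delta>"
    and "(\<Sum>i=1..s-1. int (r i) * ncl T r \<delta> i) \<le> int CARD('k) - 1"
    and "\<forall>j\<in>{1..s-1}.
          int (r j) * \<lceil>real_of_int (Delta T r \<delta> j - Delta T r \<delta> (j-1) - 1) / real_of_int (int (\<delta> j) - 1)\<rceil>
            + (Delta T r \<delta> j - Delta T r \<delta> (j-1) - 1) < int (card (T j))"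
  shows "(\<forall>j\<in>{1..s-1}. \<forall>x::nat. Delta T r \<delta> (j-1) \<le> int x \<and> int x \<le> Delta T r \<delta> j \<longrightarrow>
            Phi g n x \<le> enat (nat ((\<Sum>i=1..j-1. int (r i) * ncl T r \<delta> i)
              + int (r j) * \<lceil>real_of_int (int x - Delta T r \<delta> (j-1)) / real_of_int (int (\<delta> j) - 1)\<rceil>
              + int x)))
       \<and> (\<forall>x::nat. Delta T r \<delta> (s-1) \<le> int x \<and> x \<le> rho g n CARD('k) + 1 \<longrightarrow>
            Phi g n x \<le> enat (nat ((\<Sum>i=1..s-1. int (r i) * ncl T r \<delta> i)
              + int (r s) * \<lceil>real_of_int (int x - Delta T r \<delta> (s-1)) / real_of_int (int (\<delta> s) - 1)\<rceil>
              + int x)))"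
proof -
  note loc = assms(3)
  define c where "c i = nat (ncl T r \<delta> i)" for i
  define Yn where "Yn i = c i * (\<delta> i - 1)" for i
  define Dn where "Dn j = (\<Sum>i=1..j. Yn i)" for j
  define Sr where "Sr j = (\<Sum>i=1..j. r i * c i)" for j
  have cn: "int (c i) = ncl T r \<delta> i" for i unfolding c_def using ncl_nonneg by simp
  have Dl: "Delta T r \<delta> j = int (Dn j)" if "j \<le> s" for j
  proof -
    have "Delta T r \<delta> j = (\<Sum>i=1..j. int (Yn i))"
      unfolding Delta_def
    proof (rule sum.cong)
      fix i assume i: "i \<in> {1..j}"
      then have "2 \<le> \<delta> i" using loc_delta[OF loc] that by auto
      then have e: "int (\<delta> i - 1) = int (\<delta> i) - 1" by simp
      show "ncl T r \<delta> i * (int (\<delta> i) - 1) = int (Yn i)" unfolding Yn_def of_nat_mult e cn by (rule refl)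
    qed simp
    then show ?thesis unfolding Dn_def by simp
  qed
  have Sl: "(\<Sum>i=1..j. int (r i) * ncl T r \<delta> i) = int (Sr j)" for j
    unfolding Sr_def by (simp add: cn[symmetric])
  have DnSuc: "Dn (Suc j) = Dn j + Yn (Suc j)" for j unfolding Dn_def by simp
  have Dn0: "Dn 0 = 0" "Sr 0 = 0" unfolding Dn_def Sr_def by simp_all
  have SrSuc: "Sr (Suc j) = Sr j + r (Suc j) * c (Suc j)" for j unfolding Sr_def by simp
  have h5n: "(Yn j - 1) + r j * ((Yn j - 1 + (\<delta> j - 1) - 1) div (\<delta> j - 1)) < card (T j)"
    if j: "j \<in> {1..s-1}" and Y1: "1 \<le> Yn j" for j
  proof -
    have js: "j \<le> s" "j - 1 \<le> s" using j by auto
    have d2: "2 \<le> \<delta> j" using loc_delta[OF loc] j by auto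
    have "Dn j = Dn (j - 1) + Yn j" using DnSuc[of "j-1"] j by auto
    then have e1: "Delta T r \<delta> j - Delta T r \<delta> (j-1) - 1 = int (Yn j - 1)"
      using Dl[OF js(1)] Dl[OF js(2)] Y1 by simp
    have e2: "int (\<delta> j) - 1 = int (\<delta> j - 1)" using d2 by simp
    have ce: "\<lceil>real_of_int (int (Yn j - 1)) / real_of_int (int (\<delta> j) - 1)\<rceil>
        = int ((Yn j - 1 + (\<delta> j - 1) - 1) div (\<delta> j - 1))"
      unfolding e2 by (rule ceil_nat) (use d2 in simp)
    have "int (r j) * \<lceil>real_of_int (Delta T r \<delta> j - Delta T r \<delta> (j-1) - 1) / real_of_int (int (\<delta> j) - 1)\<rceil>
            + (Delta T r \<delta> j - Delta T r \<delta> (j-1) - 1) < int (card (T j))"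
      using bspec[OF assms(5) j] .
    then have "int (r j) * int ((Yn j - 1 + (\<delta> j - 1) - 1) div (\<delta> j - 1)) + int (Yn j - 1) < int (card (T j))"
      unfolding e1 unfolding ce .
    then have "int (r j * ((Yn j - 1 + (\<delta> j - 1) - 1) div (\<delta> j - 1)) + (Yn j - 1)) < int (card (T j))"
      by (simp only: of_nat_mult of_nat_add)
    then have "r j * ((Yn j - 1 + (\<delta> j - 1) - 1) div (\<delta> j - 1)) + (Yn j - 1) < card (T j)"
      by (simp only: of_nat_less_iff)
    then show ?thesis by linarith
  qed
  have prefix: "j \<le> s - 1 \<Longrightarrow> \<exists>U. reach g n (Dn j) U \<and> U \<subseteq> (\<Union>i\<in>{1..j}. T i) \<and> card U \<le> Sr j + Dn j" for j
  proof (induction j)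
    case 0
    then show ?case using reach_0 Dn0 by auto
  next
    case (Suc j)
    then obtain U0 where U0: "reach g n (Dn j) U0" "U0 \<subseteq> (\<Union>i\<in>{1..j}. T i)" "card U0 \<le> Sr j + Dn j" by auto
    have js: "Suc j \<in> {1..s}" using Suc.prems by auto
    have d2: "2 \<le> \<delta> (Suc j)" using loc_delta[OF loc js] .
    have "\<exists>U. reach g n (Dn j + Yn (Suc j)) U \<and> U \<subseteq> (\<Union>i\<in>{1..Suc j}. T i) \<and>
           card U \<le> card U0 + Yn (Suc j) + r (Suc j) * ((Yn (Suc j) + (\<delta> (Suc j) - 1) - 1) div (\<delta> (Suc j) - 1))"
      by (rule stage[OF loc js h5n U0(1)]) (use Suc.prems U0(2) in auto)
    moreover have "(Yn (Suc j) + (\<delta> (Suc j) - 1) - 1) div (\<delta> (Suc j) - 1) = c (Suc j)"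
      unfolding Yn_def by (rule cdiv_mult) (use d2 in simp)
    ultimately obtain U where "reach g n (Dn j + Yn (Suc j)) U" "U \<subseteq> (\<Union>i\<in>{1..Suc j}. T i)"
      "card U \<le> card U0 + Yn (Suc j) + r (Suc j) * c (Suc j)" by auto
    then show ?case using U0(3) DnSuc[of j] SrSuc[of j] by (intro exI[of _ U]) auto
  qed
  have part1: "Phi g n x \<le> enat (nat ((\<Sum>i=1..j-1. int (r i) * ncl T r \<delta> i)
              + int (r j) * \<lceil>real_of_int (int x - Delta T r \<delta> (j-1)) / real_of_int (int (\<delta> j) - 1)\<rceil>
              + int x))"
    if j: "j \<in> {1..s-1}" and x: "Delta T r \<delta> (j-1) \<le> int x" "int x \<le> Delta T r \<delta> j" for j x
  proof -
    have js: "j \<in> {1..s}" "j \<le> s" "j - 1 \<le> s" "j - 1 \<le> s - 1" using j by auto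
    have d2: "2 \<le> \<delta> j" using loc_delta[OF loc js(1)] .
    obtain U0 where U0: "reach g n (Dn (j-1)) U0" "U0 \<subseteq> (\<Union>i\<in>{1..j-1}. T i)" "card U0 \<le> Sr (j-1) + Dn (j-1)"
      using prefix[OF js(4)] by auto
    have x0x: "Dn (j-1) \<le> x" using x(1) Dl[OF js(3)] by simp
    have "Dn j = Dn (j - 1) + Yn j" using DnSuc[of "j-1"] j by auto
    then have NY: "x - Dn (j-1) \<le> Yn j" using x(2) Dl[OF js(2)] by simp
    have h5j: "1 \<le> Yn j \<Longrightarrow> (Yn j - 1) + r j * ((Yn j - 1 + (\<delta> j - 1) - 1) div (\<delta> j - 1)) < card (T j)"
      by (rule h5n[OF j])
    define N where "N = x - Dn (j-1)"
    define q where "q = (N + (\<delta> j - 1) - 1) div (\<delta> j - 1)"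
    have NY': "N \<le> Yn j" using NY unfolding N_def .
    have xN: "Dn (j-1) + N = x" unfolding N_def using x0x by simp
    have ex: "\<exists>U. reach g n (Dn (j-1) + N) U \<and> U \<subseteq> (\<Union>i\<in>{1..j}. T i) \<and>
      card U \<le> card U0 + N + r j * ((N + (\<delta> j - 1) - 1) div (\<delta> j - 1))"
      by (rule stage[OF loc js(1) h5j U0(1,2) NY'])
    then obtain U where U: "reach g n (Dn (j-1) + N) U" "card U \<le> card U0 + N + r j * q"
      unfolding q_def by blast
    have Ux: "reach g n x U" using U(1) unfolding xN .
    have c1: "card U \<le> Sr (j-1) + r j * q + x"
      using U(2) U0(3) xN by linarith
    have c2: "Sr (j-1) + r j * q + x
       = nat (int (Sr (j-1)) + int (r j) * \<lceil>real_of_int (int x - int (Dn (j-1))) / real_of_int (int (\<delta> j) - 1)\<rceil> + int x)"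
      unfolding q_def N_def by (rule target_eq[symmetric]) (use x0x d2 in auto)
    have "Phi g n x \<le> enat (card U)" by (rule reach_Phi[OF Ux])
    also have "\<dots> \<le> enat (nat (int (Sr (j-1)) + int (r j) * \<lceil>real_of_int (int x - int (Dn (j-1))) / real_of_int (int (\<delta> j) - 1)\<rceil> + int x))"
      using c1 unfolding c2 by simp
    finally show ?thesis unfolding Sl Dl[OF js(3)] .
  qed
  have part2: "Phi g n x \<le> enat (nat ((\<Sum>i=1..s-1. int (r i) * ncl T r \<delta> i)
              + int (r s) * \<lceil>real_of_int (int x - Delta T r \<delta> (s-1)) / real_of_int (int (\<delta> s) - 1)\<rceil>
              + int x))"
    if x: "Delta T r \<delta> (s-1) \<le> int x" "x \<le> rho g n CARD('k) + 1" for x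
  proof -
    have ss: "s \<in> {1..s}" "s - 1 \<le> s" using assms(1) by auto
    have d2: "2 \<le> \<delta> s" using loc_delta[OF loc ss(1)] .
    define d where "d = \<delta> s - 1"
    have d1: "1 \<le> d" using d2 unfolding d_def by linarith
    obtain U0 where U0: "reach g n (Dn (s-1)) U0" "card U0 \<le> Sr (s-1) + Dn (s-1)"
      using prefix[of "s-1"] by blast
    have x0x: "Dn (s-1) \<le> x" using x(1) Dl[OF ss(2)] by simp
    define N where "N = x - Dn (s-1)"
    define q where "q = (N + d - 1) div d"
    have xN: "Dn (s-1) + N = x" unfolding N_def using x0x by simp
    have Ipar: "\<forall>i\<in>{1..s}. r i \<le> r s \<and> d + 1 \<le> \<delta> i"
    proof
      fix i assume i: "i \<in> {1..s}"
      then have "i \<le> s" by simp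
      then have "r i \<le> r s \<and> \<delta> s \<le> \<delta> i" using loc_mono[OF loc] i ss(1) by blast
      then show "r i \<le> r s \<and> d + 1 \<le> \<delta> i" using d2 unfolding d_def by linarith
    qed
    have room: "(\<exists>i\<in>{1..s}. \<exists>\<iota>\<in>T i. \<iota> \<notin> U) \<or> U = {1..n}"
      if "y < N" and reU: "reach g n (Dn (s-1) + y) U" and "U0 \<subseteq> U" and "U - U0 \<subseteq> (\<Union>i\<in>{1..s}. T i)"
        and "card U \<le> card U0 + y + r s * (y div d)" for y U
    proof (cases "U = {1..n}")
      case False
      then obtain \<iota> where io: "\<iota> \<in> {1..n}" "\<iota> \<notin> U" using reach_sub[OF reU] by blast
      then obtain i where "i \<in> {1..s}" "\<iota> \<in> T i" using loc_cover[OF loc] by blast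
      then show ?thesis using io(2) by blast
    qed simp
    have "\<exists>x' U'. x' \<le> Dn (s-1) + N \<and> reach g n x' U' \<and> U0 \<subseteq> U' \<and> U' - U0 \<subseteq> (\<Union>i\<in>{1..s}. T i) \<and>
        card U' \<le> card U0 + N + r s * ((N + d - 1) div d) \<and> (x' = Dn (s-1) + N \<or> U' = {1..n})"
      by (rule phase[OF loc _ d1 Ipar room, where y=0 and U=U0]) (use U0(1) in auto)
    then obtain x' U' where U': "reach g n x' U'"
      "card U' \<le> card U0 + N + r s * q" "x' = Dn (s-1) + N \<or> U' = {1..n}"
      unfolding q_def by blast
    define B where "B = Sr (s-1) + r s * q + x"
    have cB: "card U' \<le> B" using U'(2) U0(2) xN unfolding B_def by linarith
    have "Phi g n x \<le> enat B"
    proof (cases "x' = Dn (s-1) + N")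
      case True
      then have "reach g n x U'" using U'(1) xN by simp
      then have "Phi g n x \<le> enat (card U')" by (rule reach_Phi)
      also have "\<dots> \<le> enat B" using cB by simp
      finally show ?thesis .
    next
      case False
      then have Un: "U' = {1..n}" using U'(3) by simp
      then have nB: "n \<le> B" using cB by simp
      obtain V1 where V1: "reach g n (Suc (rho g n CARD('k))) V1" using rho_ext[OF loc assms(2)] by blast
      have "x \<le> Suc (rho g n CARD('k))" using x(2) by simp
      then obtain V where V: "reach g n x V" using reach_prefix[OF V1] by blast
      have "card V \<le> card {1..n}"
        using card_mono[OF finite_atLeastAtMost reach_sub[OF V]] .
      then have cV: "card V \<le> B" using nB by simp
      have "Phi g n x \<le> enat (card V)" by (rule reach_Phi[OF V])
      also have "\<dots> \<le> enat B" using cV by simp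
      finally show ?thesis .
    qed
    also have "B = nat (int (Sr (s-1)) + int (r s) * \<lceil>real_of_int (int x - int (Dn (s-1))) / real_of_int (int (\<delta> s) - 1)\<rceil> + int x)"
      unfolding B_def q_def N_def d_def by (rule target_eq[symmetric]) (use x0x d2 in auto)
    finally show ?thesis unfolding Sl Dl[OF ss(2)] .
  qed
  show ?thesis using part1 part2 by blast
qed

end
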